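(* Let $A\in\mathbb{C}^{N\times N}$ have separation index $I_s(A)=1$. Then the real Lie algebra generated by $A-A^\dagger$, $iA+iA^\dagger$ and $i[A,A^\dagger]$ is isomorphic to $\mathfrak{su}(2)$.
   Context: $\mathfrak{u}(N)$ is the real Lie algebra of skew-Hermitian $N\times N$ matrices. For $\Omega\in\mathfrak{u}(N)$ and $\varphi\in\mathbb{R}$, let $E_\varphi(\Omega)=\{X\in\mathbb{C}^{N\times N}\mid \Omega X-X\Omega=i\varphi X\}$ (a complex subspace). The separation index of $A$ is $I_s(A)=\min\{\dim_{\mathbb{C}}E_\varphi(\Omega)\mid A\in E_\varphi(\Omega),\ \Omega\in\mathfrak{u}(N),\ \varphi\in\mathbb{R},\ \varphi\neq 0\}$ (and $I_s(A)=-\infty$ if there is no such pair). $[X,Y]=XY-YX$. *)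

theory Defs
  imports "HOL-Analysis.Analysis"
begin

text \<open>N x N complex matrices are rendered as complex^'n^'n with 'n a finite index type (N = CARD('n)).\<close>

definition adj :: "complex^'n^'m \<Rightarrow> complex^'m^'n" where
  "adj A = (\<chi> i j. cnj (A $ j $ i))"

definition mcomm :: "complex^'n^'n \<Rightarrow> complex^'n^'n \<Rightarrow> complex^'n^'n" where
  "mcomm X Y = X ** Y - Y ** X"

definition cscale :: "complex \<Rightarrow> complex^'n^'m \<Rightarrow> complex^'n^'m" where
  "cscale c X = (\<chi> i j. c * X $ i $ j)"

definition cdim :: "(complex^'n^'m) set \<Rightarrow> nat" where
  "cdim S = vector_space.dim cscale S"

definition u_alg :: "(complex^'n^'n) set" where
  "u_alg = {X. adj X = - X}"

definition Eig :: "real \<Rightarrow> complex^'n^'n \<Rightarrow> (complex^'n^'n) set" where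
  "Eig \<phi> \<Omega> = {X. \<Omega> ** X - X ** \<Omega> = cscale (\<i> * complex_of_real \<phi>) X}"

definition sep_index :: "complex^'n^'n \<Rightarrow> ereal" where
  "sep_index A =
     (let S = {cdim (Eig \<phi> \<Omega>) | \<phi> \<Omega>. A \<in> Eig \<phi> \<Omega> \<and> \<Omega> \<in> u_alg \<and> \<phi> \<noteq> 0}
      in if S = {} then -\<infinity> else ereal (real (Inf S)))"

definition lie_generated :: "(complex^'n^'n) set \<Rightarrow> (complex^'n^'n) set" where
  "lie_generated S = \<Inter>{L. subspace L \<and> S \<subseteq> L \<and> (\<forall>x\<in>L. \<forall>y\<in>L. mcomm x y \<in> L)}"

definition su2 :: "(complex^2^2) set" where
  "su2 = {X. adj X = - X \<and> trace X = 0}"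

definition lie_iso :: "(complex^'n^'n) set \<Rightarrow> (complex^'k^'k) set \<Rightarrow> bool" where
  "lie_iso L M = (\<exists>f. bij_betw f L M \<and>
      (\<forall>x\<in>L. \<forall>y\<in>L. \<forall>a b::real. f (a *\<^sub>R x + b *\<^sub>R y) = a *\<^sub>R f x + b *\<^sub>R f y) \<and>
      (\<forall>x\<in>L. \<forall>y\<in>L. f (mcomm x y) = mcomm (f x) (f y)))"

end

theory Submission
  imports Defs
begin


lemma mm_rdistrib: "((A::complex^'n^'n) + B) ** C = A ** C + B ** C"
  by (simp add: vec_eq_iff matrix_matrix_mult_def distrib_right sum.distrib)
lemma mm_ldistrib: "(C::complex^'n^'n) ** (A + B) = C ** A + C ** B"
  by (rule matrix_add_ldistrib)
lemma mm_rdiff: "((A::complex^'n^'n) - B) ** C = A ** C - B ** C"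
  by (simp add: vec_eq_iff matrix_matrix_mult_def left_diff_distrib sum_subtractf)
lemma mm_ldiff: "(C::complex^'n^'n) ** (A - B) = C ** A - C ** B"
  by (simp add: vec_eq_iff matrix_matrix_mult_def right_diff_distrib sum_subtractf)
lemma mm_rneg: "(- (A::complex^'n^'n)) ** C = - (A ** C)"
  by (simp add: vec_eq_iff matrix_matrix_mult_def sum_negf)
lemma mm_lneg: "(C::complex^'n^'n) ** (- A) = - (C ** A)"
  by (simp add: vec_eq_iff matrix_matrix_mult_def sum_negf)
lemma mm_cscale_l: "cscale c (A::complex^'n^'n) ** C = cscale c (A ** C)"
  by (simp add: vec_eq_iff matrix_matrix_mult_def cscale_def sum_distrib_left mult.assoc scaleR_sum_right)
lemma mm_cscale_r: "(C::complex^'n^'n) ** cscale c A = cscale c (C ** A)"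
  by (simp add: vec_eq_iff matrix_matrix_mult_def cscale_def sum_distrib_left mult_ac)
lemma scaleR_entry[simp]: "(c *\<^sub>R (A::complex^'n^'m)) $ i $ j = of_real c * A $ i $ j"
  by (simp add: scaleR_conv_of_real[where 'a=complex])
lemma mm_scaleR_l: "(c *\<^sub>R (A::complex^'n^'n)) ** C = c *\<^sub>R (A ** C)"
  by (simp add: vec_eq_iff matrix_matrix_mult_def sum_distrib_left mult.assoc scaleR_sum_right)
lemma mm_scaleR_r: "(C::complex^'n^'n) ** (c *\<^sub>R A) = c *\<^sub>R (C ** A)"
  by (simp add: vec_eq_iff matrix_matrix_mult_def sum_distrib_left mult_ac scaleR_sum_right)
lemma cscale_add: "cscale c ((A::complex^'n^'m) + B) = cscale c A + cscale c B"
  by (simp add: vec_eq_iff cscale_def distrib_left)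
lemma cscale_diff: "cscale c ((A::complex^'n^'m) - B) = cscale c A - cscale c B"
  by (simp add: vec_eq_iff cscale_def right_diff_distrib)
lemma cscale_add_left: "cscale (c + d) (A::complex^'n^'m) = cscale c A + cscale d A"
  by (simp add: vec_eq_iff cscale_def distrib_right)
lemma cscale_cscale: "cscale c (cscale d (A::complex^'n^'m)) = cscale (c * d) A"
  by (simp add: vec_eq_iff cscale_def)
lemma cscale_one: "cscale 1 (A::complex^'n^'m) = A"
  by (simp add: vec_eq_iff cscale_def)
lemma cscale_of_real: "cscale (of_real r) (A::complex^'n^'m) = r *\<^sub>R A"
  by (simp add: vec_eq_iff cscale_def scaleR_conv_of_real[where 'a=complex])
lemma cscale_zero[simp]: "cscale c (0::complex^'n^'m) = 0"
  by (simp add: vec_eq_iff cscale_def)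
lemma cscale_zero_left[simp]: "cscale 0 (A::complex^'n^'m) = 0"
  by (simp add: vec_eq_iff cscale_def)

lemma adj_adj[simp]: "adj (adj A) = A" by (simp add: adj_def vec_eq_iff)
lemma adj_add: "adj (A + B) = adj A + adj B" by (simp add: adj_def vec_eq_iff)
lemma adj_diff: "adj (A - B) = adj A - adj B" by (simp add: adj_def vec_eq_iff)
lemma adj_neg: "adj (- A) = - adj A" by (simp add: adj_def vec_eq_iff)
lemma adj_zero[simp]: "adj 0 = 0" by (simp add: adj_def vec_eq_iff)
lemma adj_cscale: "adj (cscale c A) = cscale (cnj c) (adj A)" by (simp add: adj_def vec_eq_iff cscale_def)
lemma adj_mult: "adj ((A::complex^'n^'n) ** B) = adj B ** adj A"
  by (simp add: adj_def vec_eq_iff matrix_matrix_mult_def mult.commute)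

lemma interp: "vector_space (cscale :: complex \<Rightarrow> complex^'n^'m \<Rightarrow> _)"
  by unfold_locales (simp_all add: cscale_add cscale_add_left cscale_cscale cscale_one)

lemma mcomm_add_l: "mcomm (A + B) C = mcomm A C + mcomm B C"
  by (simp add: mcomm_def mm_rdistrib mm_ldistrib)
lemma mcomm_add_r: "mcomm C (A + B) = mcomm C A + mcomm C B"
  by (simp add: mcomm_def mm_rdistrib mm_ldistrib)
lemma mcomm_diff_l: "mcomm (A - B) C = mcomm A C - mcomm B C"
  by (simp add: mcomm_def mm_rdiff mm_ldiff)
lemma mcomm_diff_r: "mcomm C (A - B) = mcomm C A - mcomm C B"
  by (simp add: mcomm_def mm_rdiff mm_ldiff)
lemma mcomm_scaleR_l: "mcomm (c *\<^sub>R A) C = c *\<^sub>R mcomm A C"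
  by (simp add: mcomm_def mm_scaleR_l mm_scaleR_r scaleR_diff_right)
lemma mcomm_scaleR_r: "mcomm C (c *\<^sub>R A) = c *\<^sub>R mcomm C A"
  by (simp add: mcomm_def mm_scaleR_l mm_scaleR_r scaleR_diff_right)
lemma mcomm_cscale_l: "mcomm (cscale c A) C = cscale c (mcomm A C)"
  by (simp add: mcomm_def mm_cscale_l mm_cscale_r cscale_diff)
lemma mcomm_cscale_r: "mcomm C (cscale c A) = cscale c (mcomm C A)"
  by (simp add: mcomm_def mm_cscale_l mm_cscale_r cscale_diff)
lemma mcomm_self[simp]: "mcomm A A = 0" by (simp add: mcomm_def)
lemma mcomm_anti: "mcomm B A = - mcomm A B" by (simp add: mcomm_def)
lemma jacobi: "mcomm A (mcomm B C) = mcomm (mcomm A B) C + mcomm B (mcomm A C)"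
  by (simp add: mcomm_def mm_rdiff mm_ldiff matrix_mul_assoc)
lemma adj_mcomm: "adj (mcomm A B) = mcomm (adj B) (adj A)"
  by (simp add: mcomm_def adj_diff adj_mult)

definition comb :: "complex^'n^'n \<Rightarrow> complex^'n^'n \<Rightarrow> complex^'n^'n \<Rightarrow> real \<times> real \<times> real \<Rightarrow> complex^'n^'n" where
  "comb U V W p = (case p of (a,b,c) \<Rightarrow> a *\<^sub>R U + b *\<^sub>R V + c *\<^sub>R W)"

definition br :: "real \<Rightarrow> real \<times> real \<times> real \<Rightarrow> real \<times> real \<times> real \<Rightarrow> real \<times> real \<times> real" where
  "br l p q = (case p of (a1,b1,c1) \<Rightarrow> case q of (a2,b2,c2) \<Rightarrow>
      (l*(b1*c2-c1*b2), l*(c1*a2-a1*c2), 2*(a1*b2-b1*a2)))"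

definition rel :: "real \<Rightarrow> complex^'n^'n \<Rightarrow> complex^'n^'n \<Rightarrow> complex^'n^'n \<Rightarrow> bool" where
  "rel l U V W = (mcomm U V = 2 *\<^sub>R W \<and> mcomm V W = l *\<^sub>R U \<and> mcomm W U = l *\<^sub>R V)"

lemma rel_facts:
  assumes "rel l U V W"
  shows "mcomm U V = 2 *\<^sub>R W" "mcomm V W = l *\<^sub>R U" "mcomm W U = l *\<^sub>R V"
    "mcomm V U = - (2 *\<^sub>R W)" "mcomm W V = - (l *\<^sub>R U)" "mcomm U W = - (l *\<^sub>R V)"
proof -
  show 1: "mcomm U V = 2 *\<^sub>R W" "mcomm V W = l *\<^sub>R U" "mcomm W U = l *\<^sub>R V"
    using assms unfolding rel_def by auto
  show "mcomm V U = - (2 *\<^sub>R W)" "mcomm W V = - (l *\<^sub>R U)" "mcomm U W = - (l *\<^sub>R V)"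
    by (metis 1 mcomm_anti)+
qed

lemma comb_mcomm:
  assumes "rel l U V W"
  shows "mcomm (comb U V W p) (comb U V W q) = comb U V W (br l p q)"
proof -
  obtain a1 b1 c1 where p: "p = (a1,b1,c1)" by (cases p) auto
  obtain a2 b2 c2 where q: "q = (a2,b2,c2)" by (cases q) auto
  have r: "mcomm U V = 2 *\<^sub>R W" "mcomm V W = l *\<^sub>R U" "mcomm W U = l *\<^sub>R V"
    "mcomm V U = - (2 *\<^sub>R W)" "mcomm W V = - (l *\<^sub>R U)" "mcomm U W = - (l *\<^sub>R V)"
    using rel_facts[OF assms(1)] by auto
  show ?thesis
    unfolding p q comb_def br_def
    by (simp add: mcomm_add_l mcomm_add_r mcomm_scaleR_l mcomm_scaleR_r r algebra_simps)
qed

lemma comb_lin: "\<alpha> *\<^sub>R comb U V W (a1,b1,c1) + \<beta> *\<^sub>R comb U V W (a2,b2,c2)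
   = comb U V W (\<alpha>*a1+\<beta>*a2, \<alpha>*b1+\<beta>*b2, \<alpha>*c1+\<beta>*c2)"
  by (simp add: comb_def algebra_simps)

lemma comb_diff: "comb U V W (a1,b1,c1) - comb U V W (a2,b2,c2)
   = comb U V W (a1-a2, b1-b2, c1-c2)"
  by (simp add: comb_def algebra_simps)

lemma comb_indep:
  assumes "rel l U V W" "U \<noteq> 0" "l > 0" "comb U V W (a,b,c) = 0"
  shows "a = 0 \<and> b = 0 \<and> c = 0"
proof -
  have r: "mcomm U V = 2 *\<^sub>R W" "mcomm V W = l *\<^sub>R U" "mcomm W U = l *\<^sub>R V"
    "mcomm V U = - (2 *\<^sub>R W)" "mcomm W V = - (l *\<^sub>R U)" "mcomm U W = - (l *\<^sub>R V)"
    using rel_facts[OF assms(1)] by auto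
  have T: "a *\<^sub>R U + b *\<^sub>R V + c *\<^sub>R W = 0" using assms(4) by (simp add: comb_def)
  have "mcomm U (a *\<^sub>R U + b *\<^sub>R V + c *\<^sub>R W) = 0" using T by (simp add: mcomm_def)
  then have E1: "(2*b) *\<^sub>R W - (c*l) *\<^sub>R V = 0"
    by (simp add: mcomm_add_r mcomm_scaleR_r r algebra_simps)
  have "mcomm V ((2*b) *\<^sub>R W - (c*l) *\<^sub>R V) = 0" using E1 by (simp add: mcomm_def)
  then have "(2*b*l) *\<^sub>R U = 0" by (simp add: mcomm_diff_r mcomm_scaleR_r r algebra_simps)
  then have b: "b = 0" using assms(2,3) by simp
  have "mcomm W ((2*b) *\<^sub>R W - (c*l) *\<^sub>R V) = 0" using E1 by (simp add: mcomm_def)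
  then have "(c*l*l) *\<^sub>R U = 0" by (simp add: mcomm_diff_r mcomm_scaleR_r r algebra_simps)
  then have c: "c = 0" using assms(2,3) by simp
  have "a *\<^sub>R U = 0" using T b c by simp
  then have "a = 0" using assms(2) by simp
  with b c show ?thesis by simp
qed

lemma comb_inj:
  assumes "rel l U V W" "U \<noteq> 0" "l > 0"
  shows "inj (comb U V W)"
proof (rule injI)
  fix p q assume e: "comb U V W p = comb U V W q"
  obtain a1 b1 c1 where p: "p = (a1,b1,c1)" by (cases p) auto
  obtain a2 b2 c2 where q: "q = (a2,b2,c2)" by (cases q) auto
  have "comb U V W (a1-a2, b1-b2, c1-c2) = 0" using e unfolding p q comb_diff[symmetric] by simp
  from comb_indep[OF assms this] show "p = q" unfolding p q by simp
qed

lemma triple_iso: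
  fixes U V W :: "complex^'n^'n" and P Q R :: "complex^'k^'k"
  assumes rU: "rel l U V W" and rP: "rel l P Q R" and "U \<noteq> 0" "P \<noteq> 0" "l > 0"
  shows "lie_iso (range (comb U V W)) (range (comb P Q R))"
proof -
  let ?g = "comb U V W" and ?h = "comb P Q R"
  have ig: "inj ?g" by (rule comb_inj[OF rU assms(3,5)])
  have ih: "inj ?h" by (rule comb_inj[OF rP assms(4,5)])
  define f where "f x = ?h (inv ?g x)" for x
  have fg: "f (?g p) = ?h p" for p unfolding f_def using ig by simp
  have "bij_betw f (range ?g) (range ?h)"
  proof (rule bij_betw_imageI)
    show "inj_on f (range ?g)"
      by (rule inj_onI) (use fg ih in \<open>auto dest: injD\<close>)
    show "f ` range ?g = range ?h" using fg by (auto simp: image_iff) (metis fg)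
  qed
  moreover have "\<forall>x\<in>range ?g. \<forall>y\<in>range ?g. \<forall>a b::real. f (a *\<^sub>R x + b *\<^sub>R y) = a *\<^sub>R f x + b *\<^sub>R f y"
  proof (intro ballI allI)
    fix x y a b assume "x \<in> range ?g" "y \<in> range ?g"
    then obtain a1 b1 c1 a2 b2 c2 where "x = ?g (a1,b1,c1)" "y = ?g (a2,b2,c2)" by auto
    then show "f (a *\<^sub>R x + b *\<^sub>R y) = a *\<^sub>R f x + b *\<^sub>R f y"
      by (simp add: comb_lin fg)
  qed
  moreover have "\<forall>x\<in>range ?g. \<forall>y\<in>range ?g. f (mcomm x y) = mcomm (f x) (f y)"
  proof (intro ballI)
    fix x y assume "x \<in> range ?g" "y \<in> range ?g"
    then obtain p q where "x = ?g p" "y = ?g q" by auto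
    then show "f (mcomm x y) = mcomm (f x) (f y)"
      by (simp add: comb_mcomm[OF rU] comb_mcomm[OF rP] fg)
  qed
  ultimately show ?thesis unfolding lie_iso_def by blast
qed

lemma range_comb_subspace: "subspace (range (comb U V W))"
  unfolding subspace_def
proof (intro conjI ballI allI)
  show "0 \<in> range (comb U V W)" by (rule range_eqI[of _ _ "(0,0,0)"]) (simp add: comb_def)
next
  fix x y assume "x \<in> range (comb U V W)" "y \<in> range (comb U V W)"
  then obtain a1 b1 c1 a2 b2 c2 where "x = comb U V W (a1,b1,c1)" "y = comb U V W (a2,b2,c2)" by auto
  then show "x + y \<in> range (comb U V W)" using comb_lin[of 1 U V W a1 b1 c1 1 a2 b2 c2] by auto
next
  fix c :: real and x assume "x \<in> range (comb U V W)"
  then obtain a1 b1 c1 where "x = comb U V W (a1,b1,c1)" by auto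
  then show "c *\<^sub>R x \<in> range (comb U V W)" using comb_lin[of c U V W a1 b1 c1 0 0 0 0] by auto
qed

lemma lie_gen_comb:
  assumes "rel l U V W"
  shows "lie_generated {U, V, W} = range (comb U V W)"
proof
  have "U \<in> range (comb U V W)" by (rule range_eqI[of _ _ "(1,0,0)"]) (simp add: comb_def)
  moreover have "V \<in> range (comb U V W)" by (rule range_eqI[of _ _ "(0,1,0)"]) (simp add: comb_def)
  moreover have "W \<in> range (comb U V W)" by (rule range_eqI[of _ _ "(0,0,1)"]) (simp add: comb_def)
  moreover have "\<forall>x\<in>range (comb U V W). \<forall>y\<in>range (comb U V W). mcomm x y \<in> range (comb U V W)"
    using comb_mcomm[OF assms] by auto
  ultimately show "lie_generated {U, V, W} \<subseteq> range (comb U V W)"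
    unfolding lie_generated_def using range_comb_subspace by (intro Inter_lower) auto
next
  show "range (comb U V W) \<subseteq> lie_generated {U, V, W}"
    unfolding lie_generated_def
  proof (intro Inter_greatest subsetI)
    fix L x assume L: "L \<in> {L. subspace L \<and> {U, V, W} \<subseteq> L \<and> (\<forall>x\<in>L. \<forall>y\<in>L. mcomm x y \<in> L)}"
      and x: "x \<in> range (comb U V W)"
    then obtain a b c where "x = a *\<^sub>R U + b *\<^sub>R V + c *\<^sub>R W" by (auto simp: comb_def)
    with L show "x \<in> L" by (auto intro!: subspace_add subspace_scale)
  qed
qed



definition e1 :: "complex^2^2" where "e1 = (\<chi> i j. if i = j then 0 else - \<i>/2)"
definition e2 :: "complex^2^2" where "e2 = (\<chi> i j. if i = j then 0 else if i = 1 then -1/2 else 1/2)"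
definition e3 :: "complex^2^2" where "e3 = (\<chi> i j. if i \<noteq> j then 0 else if i = 1 then - \<i>/2 else \<i>/2)"

lemma e12: "mcomm e1 e2 = e3"
  by (simp add: mcomm_def e1_def e2_def e3_def vec_eq_iff forall_2 matrix_matrix_mult_def sum_2 field_simps)
lemma e23: "mcomm e2 e3 = e1"
  by (simp add: mcomm_def e1_def e2_def e3_def vec_eq_iff forall_2 matrix_matrix_mult_def sum_2 field_simps)
lemma e31: "mcomm e3 e1 = e2"
  by (simp add: mcomm_def e1_def e2_def e3_def vec_eq_iff forall_2 matrix_matrix_mult_def sum_2 field_simps)

lemma su2_rel:
  assumes "l > 0"
  shows "rel l (sqrt (2*l) *\<^sub>R e1) (sqrt (2*l) *\<^sub>R e2) (l *\<^sub>R e3)"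
proof -
  have s: "sqrt (2*l) * sqrt (2*l) = 2*l" using assms by simp
  show ?thesis unfolding rel_def
    using assms by (simp add: mcomm_scaleR_l mcomm_scaleR_r e12 e23 e31 s mult_ac)
qed

lemma e1_nz: "l > 0 \<Longrightarrow> sqrt (2*l) *\<^sub>R e1 \<noteq> 0"
  by (simp add: e1_def vec_eq_iff forall_2)

lemma su2_range:
  assumes "l > 0"
  shows "su2 = range (comb (sqrt (2*l) *\<^sub>R e1) (sqrt (2*l) *\<^sub>R e2) (l *\<^sub>R e3))"
proof
  have s: "sqrt (2*l) > 0" using assms by simp
  show "su2 \<subseteq> range (comb (sqrt (2*l) *\<^sub>R e1) (sqrt (2*l) *\<^sub>R e2) (l *\<^sub>R e3))"
  proof
    fix X assume "X \<in> su2"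
    then have h: "adj X = - X" "trace X = 0" by (auto simp: su2_def)
    have "adj X $ 1 $ 1 = (- X) $ 1 $ 1" using h(1) by simp
    then have h11: "X$1$1 = - cnj (X$1$1)" by (simp add: adj_def)
    have "adj X $ 1 $ 2 = (- X) $ 1 $ 2" using h(1) by simp
    then have h21: "X$2$1 = - cnj (X$1$2)" by (simp add: adj_def) (metis complex_cnj_cnj complex_cnj_minus)
    have h22: "X$2$2 = - X$1$1" using h(2) by (simp add: trace_def sum_2 eq_neg_iff_add_eq_0 add.commute)
    have r11: "Re (X$1$1) = 0" using h11 by (simp add: complex_eq_iff)
    let ?p = "(-2 * Im (X$1$2) / sqrt (2*l), -2 * Re (X$1$2) / sqrt (2*l), -2 * Im (X$1$1) / l)"
    have "X = comb (sqrt (2*l) *\<^sub>R e1) (sqrt (2*l) *\<^sub>R e2) (l *\<^sub>R e3) ?p"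
      using s assms r11 h21 h22
      by (simp add: comb_def e1_def e2_def e3_def vec_eq_iff forall_2 complex_eq_iff)
    then show "X \<in> range (comb (sqrt (2*l) *\<^sub>R e1) (sqrt (2*l) *\<^sub>R e2) (l *\<^sub>R e3))" by blast
  qed
next
  show "range (comb (sqrt (2*l) *\<^sub>R e1) (sqrt (2*l) *\<^sub>R e2) (l *\<^sub>R e3)) \<subseteq> su2"
    by (auto simp: su2_def comb_def e1_def e2_def e3_def vec_eq_iff forall_2 adj_def trace_def sum_2 complex_eq_iff)
qed



lemma trace_cscale: "trace (cscale c (X::complex^'n^'n)) = c * trace X"
  by (simp add: trace_def cscale_def sum_distrib_left)

definition fro :: "complex^'n^'n \<Rightarrow> real" where
  "fro X = (\<Sum>i\<in>UNIV. \<Sum>j\<in>UNIV. (cmod (X$i$j))^2)"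

lemma mult_cnj_sq: "z * cnj z = (of_real (cmod z))^2"
  by (metis complex_norm_square of_real_power)

lemma trace_fro: "trace (X ** adj X) = of_real (fro X)"
  by (simp add: trace_def matrix_matrix_mult_def adj_def fro_def of_real_sum) (simp add: mult_cnj_sq)

lemma fro_pos: assumes "X \<noteq> 0" shows "fro X > 0"
proof -
  obtain i j where ij: "X$i$j \<noteq> 0" using assms by (auto simp: vec_eq_iff)
  have "0 < (\<Sum>j'\<in>UNIV. (cmod (X$i$j'))^2)"
    using sum_pos2[of UNIV j "\<lambda>j'. (cmod (X$i$j'))^2"] ij by auto
  moreover have "\<And>i'. i' \<in> UNIV \<Longrightarrow> 0 \<le> (\<Sum>j'\<in>UNIV. (cmod (X$i'$j'))^2)"
    by (simp add: sum_nonneg)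
  ultimately show ?thesis unfolding fro_def
    by (rule sum_pos2[OF finite UNIV_I])
qed

lemma adj_scaleR: "adj (c *\<^sub>R (X::complex^'n^'n)) = c *\<^sub>R adj X"
  by (simp add: adj_def vec_eq_iff)

lemma cdim_zero: "cdim ({0} :: (complex^'n^'n) set) = 0"
proof -
  interpret cs: vector_space "cscale :: complex \<Rightarrow> complex^'n^'n \<Rightarrow> _" by (rule interp)
  show ?thesis unfolding cdim_def
    using cs.dim_eq_card[of "{}" "{0}"] by (simp add: cs.span_insert_0 cs.independent_empty)
qed

lemma Eig_1_0: "Eig 1 (0::complex^'n^'n) = {0}"
proof -
  have "X = 0" if "cscale \<i> X = 0" for X :: "complex^'n^'n"
    using that by (simp add: vec_eq_iff cscale_def)
  then show ?thesis unfolding Eig_def by auto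
qed

lemma dim1_mult:
  assumes "cdim (E :: (complex^'n^'n) set) = 1" "A \<in> E" "A \<noteq> 0" "M \<in> E"
  shows "\<exists>\<mu>. M = cscale \<mu> A"
proof -
  interpret cs: vector_space "cscale :: complex \<Rightarrow> complex^'n^'n \<Rightarrow> _" by (rule interp)
  obtain B where B: "B \<subseteq> E" "cs.independent B" "E \<subseteq> cs.span B" "card B = cs.dim E"
    by (rule cs.basis_exists)
  then obtain b where b: "B = {b}" using assms(1) unfolding cdim_def by (auto simp: card_1_singleton_iff)
  have "A \<in> range (\<lambda>k. cscale k b)" "M \<in> range (\<lambda>k. cscale k b)"
    using B(3) assms(2,4) unfolding b cs.span_singleton by auto
  then obtain c d where cd: "A = cscale c b" "M = cscale d b" by auto
  have "c \<noteq> 0" using cd assms(3) by auto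
  then have "M = cscale (d/c) A" using cd by (simp add: cscale_cscale)
  then show ?thesis by blast
qed



lemma sep_obtain:
  fixes A :: "complex^'n^'n"
  assumes "sep_index A = 1"
  shows "A \<noteq> 0 \<and> (\<exists>\<phi> \<Omega>. A \<in> Eig \<phi> \<Omega> \<and> \<Omega> \<in> u_alg \<and> \<phi> \<noteq> 0 \<and> cdim (Eig \<phi> \<Omega>) = 1)"
proof -
  define S where "S = {cdim (Eig \<phi> \<Omega>) | \<phi> \<Omega>. A \<in> Eig \<phi> \<Omega> \<and> \<Omega> \<in> u_alg \<and> \<phi> \<noteq> 0}"
  have SA: "(if S = {} then -\<infinity> else ereal (real (Inf S))) = 1"
    using assms unfolding sep_index_def S_def Let_def by simp
  then have ne: "S \<noteq> {}" by (auto split: if_splits)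
  with SA have "Inf S = 1" by simp
  moreover have "Inf S \<in> S" using ne by (rule Inf_nat_def1)
  ultimately have "1 \<in> S" by simp
  moreover have "A \<noteq> 0"
  proof
    assume "A = 0"
    then have "cdim (Eig 1 (0::complex^'n^'n)) \<in> S"
      unfolding S_def
      by (intro CollectI exI[of _ 1] exI[of _ "0::complex^'n^'n"]) (simp add: Eig_1_0 u_alg_def)
    then have "0 \<in> S" by (simp add: Eig_1_0 cdim_zero)
    then have "Inf S \<le> 0" unfolding Inf_nat_def by (rule Least_le)
    with \<open>Inf S = 1\<close> show False by simp
  qed
  moreover obtain \<phi> \<Omega> where "1 = cdim (Eig \<phi> \<Omega>)" "A \<in> Eig \<phi> \<Omega>" "\<Omega> \<in> u_alg" "\<phi> \<noteq> 0"
    using \<open>1 \<in> S\<close> unfolding S_def by blast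
  ultimately show ?thesis by metis
qed

theorem proposition2p26:
  fixes A :: "complex^'n^'n"
  assumes "sep_index A = 1"
  shows "lie_iso (lie_generated {A - adj A, cscale \<i> A + cscale \<i> (adj A), cscale \<i> (mcomm A (adj A))}) su2"
proof -
  obtain \<phi> \<Omega> where A0: "A \<noteq> 0" and AE: "A \<in> Eig \<phi> \<Omega>" and Om: "\<Omega> \<in> u_alg" and ph: "\<phi> \<noteq> 0"
    and dim1: "cdim (Eig \<phi> \<Omega>) = 1"
    using sep_obtain[OF assms] by blast
  define K where "K = mcomm A (adj A)"
  have adjOm: "adj \<Omega> = - \<Omega>" using Om by (simp add: u_alg_def)
  have OA: "mcomm \<Omega> A = cscale (\<i> * of_real \<phi>) A" using AE by (simp add: Eig_def mcomm_def)
  have OAd: "mcomm \<Omega> (adj A) = cscale (- (\<i> * of_real \<phi>)) (adj A)"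
  proof -
    have "adj (mcomm \<Omega> A) = mcomm (adj A) (- \<Omega>)" by (simp add: adj_mcomm adjOm)
    also have "\<dots> = mcomm \<Omega> (adj A)" by (simp add: mcomm_def mm_lneg mm_rneg)
    finally show ?thesis using OA by (simp add: adj_cscale)
  qed
  have OK: "mcomm \<Omega> K = 0"
    unfolding K_def jacobi OA OAd mcomm_cscale_l mcomm_cscale_r
    by (simp add: vec_eq_iff cscale_def)
  have "mcomm \<Omega> (mcomm K A) = cscale (\<i> * of_real \<phi>) (mcomm K A)"
    unfolding jacobi[of \<Omega> K A] OK OA mcomm_cscale_r by (simp add: mcomm_def)
  then have KAE: "mcomm K A \<in> Eig \<phi> \<Omega>" by (simp add: Eig_def mcomm_def)
  obtain \<mu> where mu: "mcomm K A = cscale \<mu> A" using dim1_mult[OF dim1 AE A0 KAE] by blast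
  have adjK: "adj K = K" unfolding K_def by (simp add: adj_mcomm)
  have tr1: "trace (mcomm K A ** adj A) = trace (K ** adj K)"
  proof -
    have "trace (A ** K ** adj A) = trace (K ** (adj A ** A))"
      using trace_mul_sym[of A "K ** adj A"] by (simp add: matrix_mul_assoc)
    moreover have "K ** K = K ** (A ** adj A) - K ** (adj A ** A)"
      by (simp add: K_def mcomm_def mm_ldiff)
    ultimately show ?thesis unfolding mcomm_def adjK
      by (simp add: mm_rdiff trace_sub matrix_mul_assoc)
  qed
  have tr2: "trace (mcomm \<Omega> A ** adj A) = trace (\<Omega> ** K)"
  proof -
    have "trace (A ** \<Omega> ** adj A) = trace (\<Omega> ** (adj A ** A))"
      using trace_mul_sym[of A "\<Omega> ** adj A"] by (simp add: matrix_mul_assoc)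
    then show ?thesis unfolding mcomm_def K_def
      by (simp add: mm_rdiff trace_sub mm_ldiff matrix_mul_assoc)
  qed
  have K0: "K \<noteq> 0"
  proof
    assume "K = 0"
    then have "(\<i> * of_real \<phi>) * of_real (fro A) = 0"
      using tr2 unfolding OA mm_cscale_l trace_cscale trace_fro by (simp add: trace_def)
    then show False using ph fro_pos[OF A0] by simp
  qed
  have "\<mu> * of_real (fro A) = of_real (fro K)"
    using tr1 unfolding mu mm_cscale_l trace_cscale trace_fro by simp
  then have mu': "\<mu> = of_real (fro K / fro A)" using fro_pos[OF A0] by (simp add: field_simps)
  define l where "l = fro K / fro A"
  have l0: "l > 0" unfolding l_def using fro_pos[OF A0] fro_pos[OF K0] by simp
  have KA: "mcomm K A = l *\<^sub>R A" using mu mu' cscale_of_real[of l A] by (simp add: l_def del: of_real_divide)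
  have KAd: "mcomm K (adj A) = - (l *\<^sub>R adj A)"
  proof -
    have "adj (mcomm K A) = mcomm (adj A) K" by (simp add: adj_mcomm adjK)
    then show ?thesis using KA mcomm_anti[of "adj A" K] by (simp add: adj_scaleR)
  qed
  have AK: "mcomm A K = - (l *\<^sub>R A)" using KA mcomm_anti[of A K] by simp
  have AdK: "mcomm (adj A) K = l *\<^sub>R adj A" using KAd mcomm_anti[of "adj A" K] by simp
  have AAd: "mcomm A (adj A) = K" by (simp add: K_def)
  have AdA: "mcomm (adj A) A = - K" using mcomm_anti[of "adj A" A] by (simp add: K_def)
  let ?U = "A - adj A" and ?V = "cscale \<i> A + cscale \<i> (adj A)" and ?W = "cscale \<i> K"
  have rel: "rel l ?U ?V ?W"
    unfolding rel_def
    by (simp add: mcomm_add_l mcomm_add_r mcomm_diff_l mcomm_diff_r mcomm_cscale_l mcomm_cscale_r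
        KA KAd AK AdK AAd AdA) (simp add: vec_eq_iff cscale_def algebra_simps scaleR_conv_of_real[where 'a=complex])
  have U0: "?U \<noteq> 0"
  proof
    assume "?U = 0"
    then have "adj A = A" by simp
    then have "K = 0" by (simp add: K_def)
    with K0 show False by simp
  qed
  have "lie_generated {?U, ?V, ?W} = range (comb ?U ?V ?W)" by (rule lie_gen_comb[OF rel])
  moreover have "su2 = range (comb (sqrt (2*l) *\<^sub>R e1) (sqrt (2*l) *\<^sub>R e2) (l *\<^sub>R e3))"
    by (rule su2_range[OF l0])
  ultimately show ?thesis unfolding K_def[symmetric]
    using triple_iso[OF rel su2_rel[OF l0] U0 e1_nz[OF l0] l0] by simp
qed


end
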